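(* Let $c_1, c_2$ be \textsc{Imp} commands, $\Phi,\Psi$ relational assertions, and $r$ a \textsc{CoreRel} aligned command. If $\langle\!\langle c_1\mid c_2\rangle\!\rangle \equiv r$ and $\vdash \{\Phi\}\ [\![r]\!]\ \{\Psi\}$ is derivable in the \textsc{Imp} program logic, then $\models_R \{\Phi\}\ c_1 \otimes c_2\ \{\Psi\}$.
   Context: \textsc{Imp} is the imperative language with integer expressions $a ::= n \mid x \mid a+a \mid a-a \mid a*a$, Boolean expressions $b ::= \mathsf{true}\mid\mathsf{false}\mid a=a \mid a<a \mid \neg b \mid b\wedge b$, and commands $c ::= \mathsf{skip} \mid c;c \mid x:=a \mid \mathsf{while}\ b\ c \mid \mathsf{if}\ b\ \mathsf{then}\ c\ \mathsf{else}\ c$. States are partial functions from identifiers to integers; $\sigma,c\Downarrow\sigma'$ is standard big-step semantics. $\vdash\{\phi\}\,c\,\{\psi\}$ denotes derivability in a standard (sound) Hoare logic for partial correctness of \textsc{Imp}, parameterized over an assertion language with satisfaction $\sigma\models\phi$. Relational assertions refer to variables of the left and right programs via subscripts $1$ and $2$ (e.g. $x_1 > x_2$); for states $\sigma_1,\sigma_2$ of the two programs, $\sigma_1\uplus\sigma_2$ is the combined state over the disjoint (left/right renamed) variable spaces. Relational safety: $\models_R\{\Phi\}\,c_1\otimes c_2\,\{\Psi\}$ iff for all $\sigma_1,\sigma_2$ with $\sigma_1\uplus\sigma_2\models\Phi$, and all $\sigma_1',\sigma_2'$ with $\sigma_1,c_1\Downarrow\sigma_1'$ and $\sigma_2,c_2\Downarrow\sigma_2'$,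 we have $\sigma_1'\uplus\sigma_2'\models\Psi$. \textsc{CoreRel} aligned commands are $r ::= \langle\!\langle c \mid c\rangle\!\rangle \mid r ;; r \mid \mathsf{if}_R\ \langle\!\langle b\mid b\rangle\!\rangle\ \mathsf{then}\ r\ \mathsf{else}\ r \mid \mathsf{while}_R\ \langle\!\langle b \mid b\rangle\!\rangle\ r$, with big-step semantics $(\sigma_1,\sigma_2),r\Downarrow_R(\sigma_1',\sigma_2')$: $\langle\!\langle c_1\mid c_2\rangle\!\rangle$ runs $c_1$ on $\sigma_1$ and $c_2$ on $\sigma_2$ independently; $r_1;;r_2$ runs $r_1$ then $r_2$; $\mathsf{if}_R\langle\!\langle b_1\mid b_2\rangle\!\rangle\,\mathsf{then}\,r_1\,\mathsf{else}\,r_2$ runs $r_1$ if $b_1$ is true in $\sigma_1$ and $b_2$ is true in $\sigma_2$, and runs $r_2$ if either is false; $\mathsf{while}_R\langle\!\langle b_1\mid b_2\rangle\!\rangle\,r$ stops (leaving the states unchanged) as soon as either $b_1$ is false in the left state or $b_2$ is false in the right state, and otherwise runs $r$ and repeats. $r_1\equiv r_2$ iff for all $\sigma_1,\sigma_2,\sigma_1',\sigma_2'$, $(\sigma_1,\sigma_2),r_1\Downarrow_R(\sigma_1',\sigma_2')\Leftrightarrow(\sigma_1,\sigma_2),r_2\Downarrow_R(\sigma_1',\sigma_2')$. Reification $[\![\cdot]\!]$ into \textsc{Imp}, using renamings $[\![\cdot]\!]_L,[\![\cdot]\!]_R$ that map left/right variables to disjoint identifier sets (left variable $x\mapsto x_1$,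 right $x\mapsto x_2$): $[\![\langle\!\langle s_1\mid s_2\rangle\!\rangle]\!] = [\![s_1]\!]_L;[\![s_2]\!]_R$; $[\![r_1;;r_2]\!]=[\![r_1]\!];[\![r_2]\!]$; $[\![\mathsf{while}_R\langle\!\langle b_1\mid b_2\rangle\!\rangle\,r]\!]=\mathsf{while}\ ([\![b_1]\!]_L\wedge[\![b_2]\!]_R)\ [\![r]\!]$; $[\![\mathsf{if}_R\langle\!\langle b_1\mid b_2\rangle\!\rangle\,\mathsf{then}\,r_1\,\mathsf{else}\,r_2]\!]=\mathsf{if}\ ([\![b_1]\!]_L\wedge[\![b_2]\!]_R)\ \mathsf{then}\ [\![r_1]\!]\ \mathsf{else}\ [\![r_2]\!]$. *)

theory Defs
  imports Main
begin

datatype 'v aexp = N int | V 'v | Plus "'v aexp" "'v aexp" | Minus "'v aexp" "'v aexp"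
  | Times "'v aexp" "'v aexp"

datatype 'v bexp = Bc bool | Eq "'v aexp" "'v aexp" | Less "'v aexp" "'v aexp"
  | Not "'v bexp" | And "'v bexp" "'v bexp"

datatype 'v com = SKIP | Seq "'v com" "'v com" | Assign 'v "'v aexp"
  | While "'v bexp" "'v com" | If "'v bexp" "'v com" "'v com"

type_synonym 'v state = "'v \<Rightarrow> int option"

definition lift2 :: "('a \<Rightarrow> 'b \<Rightarrow> 'c) \<Rightarrow> 'a option \<Rightarrow> 'b option \<Rightarrow> 'c option" where
  "lift2 f x y = (case x of None \<Rightarrow> None | Some a \<Rightarrow> (case y of None \<Rightarrow> None | Some b \<Rightarrow> Some (f a b)))"

fun aval :: "'v aexp \<Rightarrow> 'v state \<Rightarrow> int option" where
  "aval (N n) s = Some n"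
| "aval (V x) s = s x"
| "aval (Plus a1 a2) s = lift2 (+) (aval a1 s) (aval a2 s)"
| "aval (Minus a1 a2) s = lift2 (-) (aval a1 s) (aval a2 s)"
| "aval (Times a1 a2) s = lift2 (*) (aval a1 s) (aval a2 s)"

fun bval :: "'v bexp \<Rightarrow> 'v state \<Rightarrow> bool option" where
  "bval (Bc v) s = Some v"
| "bval (Eq a1 a2) s = lift2 (=) (aval a1 s) (aval a2 s)"
| "bval (Less a1 a2) s = lift2 (<) (aval a1 s) (aval a2 s)"
| "bval (Not b) s = map_option (\<lambda>v. \<not> v) (bval b s)"
| "bval (And b1 b2) s = lift2 (\<and>) (bval b1 s) (bval b2 s)"

inductive big_step :: "'v state \<Rightarrow> 'v com \<Rightarrow> 'v state \<Rightarrow> bool" where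
  Skip: "big_step s SKIP s"
| Assign: "aval a s = Some v \<Longrightarrow> big_step s (Assign x a) (s(x \<mapsto> v))"
| Seq: "big_step s c1 s' \<Longrightarrow> big_step s' c2 s'' \<Longrightarrow> big_step s (Seq c1 c2) s''"
| IfTrue: "bval b s = Some True \<Longrightarrow> big_step s c1 t \<Longrightarrow> big_step s (If b c1 c2) t"
| IfFalse: "bval b s = Some False \<Longrightarrow> big_step s c2 t \<Longrightarrow> big_step s (If b c1 c2) t"
| WhileFalse: "bval b s = Some False \<Longrightarrow> big_step s (While b c) s"
| WhileTrue: "bval b s = Some True \<Longrightarrow> big_step s c s' \<Longrightarrow> big_step s' (While b c) s''
    \<Longrightarrow> big_step s (While b c) s''"

type_synonym 'v assn = "'v state \<Rightarrow> bool"

definition sat :: "'v state \<Rightarrow> 'v assn \<Rightarrow> bool" where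
  "sat s P = P s"

inductive hoare :: "'v assn \<Rightarrow> 'v com \<Rightarrow> 'v assn \<Rightarrow> bool" where
  HSkip: "hoare P SKIP P"
| HAssign: "hoare (\<lambda>s. \<exists>v. aval a s = Some v \<and> sat (s(x \<mapsto> v)) Q) (Assign x a) Q"
| HSeq: "hoare P c1 Q \<Longrightarrow> hoare Q c2 R \<Longrightarrow> hoare P (Seq c1 c2) R"
| HIf: "hoare (\<lambda>s. sat s P \<and> bval b s = Some True) c1 Q
    \<Longrightarrow> hoare (\<lambda>s. sat s P \<and> bval b s = Some False) c2 Q
    \<Longrightarrow> hoare P (If b c1 c2) Q"
| HWhile: "hoare (\<lambda>s. sat s P \<and> bval b s = Some True) c P
    \<Longrightarrow> hoare P (While b c) (\<lambda>s. sat s P \<and> bval b s = Some False)"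
| HConseq: "(\<forall>s. sat s P' \<longrightarrow> sat s P) \<Longrightarrow> hoare P c Q \<Longrightarrow> (\<forall>s. sat s Q \<longrightarrow> sat s Q')
    \<Longrightarrow> hoare P' c Q'"

text \<open>Left variable x is renamed to Inl x (= x_1), right variable x to Inr x (= x_2).\<close>

definition merge :: "'v state \<Rightarrow> 'v state \<Rightarrow> ('v + 'v) state" where
  "merge s1 s2 = (\<lambda>v. case v of Inl x \<Rightarrow> s1 x | Inr x \<Rightarrow> s2 x)"

definition renL_com :: "'v com \<Rightarrow> ('v + 'v) com" where "renL_com = map_com Inl"
definition renR_com :: "'v com \<Rightarrow> ('v + 'v) com" where "renR_com = map_com Inr"
definition renL_bexp :: "'v bexp \<Rightarrow> ('v + 'v) bexp" where "renL_bexp = map_bexp Inl"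
definition renR_bexp :: "'v bexp \<Rightarrow> ('v + 'v) bexp" where "renR_bexp = map_bexp Inr"

definition rel_valid :: "('v + 'v) assn \<Rightarrow> 'v com \<Rightarrow> 'v com \<Rightarrow> ('v + 'v) assn \<Rightarrow> bool" where
  "rel_valid Phi c1 c2 Psi \<longleftrightarrow>
     (\<forall>s1 s2 t1 t2. sat (merge s1 s2) Phi \<longrightarrow> big_step s1 c1 t1 \<longrightarrow> big_step s2 c2 t2
        \<longrightarrow> sat (merge t1 t2) Psi)"

datatype 'v rcom = Aligned "'v com" "'v com" | RSeq "'v rcom" "'v rcom"
  | RIf "'v bexp" "'v bexp" "'v rcom" "'v rcom"
  | RWhile "'v bexp" "'v bexp" "'v rcom"

inductive rbig_step :: "'v state \<times> 'v state \<Rightarrow> 'v rcom \<Rightarrow> 'v state \<times> 'v state \<Rightarrow> bool" where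
  RAligned: "big_step s1 c1 t1 \<Longrightarrow> big_step s2 c2 t2 \<Longrightarrow> rbig_step (s1, s2) (Aligned c1 c2) (t1, t2)"
| RSeq: "rbig_step s r1 s' \<Longrightarrow> rbig_step s' r2 s'' \<Longrightarrow> rbig_step s (RSeq r1 r2) s''"
| RIfTrue: "bval b1 s1 = Some True \<Longrightarrow> bval b2 s2 = Some True \<Longrightarrow> rbig_step (s1, s2) r1 t
    \<Longrightarrow> rbig_step (s1, s2) (RIf b1 b2 r1 r2) t"
| RIfFalse: "bval b1 s1 = Some v1 \<Longrightarrow> bval b2 s2 = Some v2 \<Longrightarrow> \<not> (v1 \<and> v2)
    \<Longrightarrow> rbig_step (s1, s2) r2 t \<Longrightarrow> rbig_step (s1, s2) (RIf b1 b2 r1 r2) t"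
| RWhileFalse: "bval b1 s1 = Some v1 \<Longrightarrow> bval b2 s2 = Some v2 \<Longrightarrow> \<not> (v1 \<and> v2)
    \<Longrightarrow> rbig_step (s1, s2) (RWhile b1 b2 r) (s1, s2)"
| RWhileTrue: "bval b1 s1 = Some True \<Longrightarrow> bval b2 s2 = Some True \<Longrightarrow> rbig_step (s1, s2) r s'
    \<Longrightarrow> rbig_step s' (RWhile b1 b2 r) s'' \<Longrightarrow> rbig_step (s1, s2) (RWhile b1 b2 r) s''"

definition requiv :: "'v rcom \<Rightarrow> 'v rcom \<Rightarrow> bool" where
  "requiv r1 r2 \<longleftrightarrow> (\<forall>s t. rbig_step s r1 t \<longleftrightarrow> rbig_step s r2 t)"

fun reify :: "'v rcom \<Rightarrow> ('v + 'v) com" where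
  "reify (Aligned c1 c2) = Seq (renL_com c1) (renR_com c2)"
| "reify (RSeq r1 r2) = Seq (reify r1) (reify r2)"
| "reify (RWhile b1 b2 r) = While (And (renL_bexp b1) (renR_bexp b2)) (reify r)"
| "reify (RIf b1 b2 r1 r2) = If (And (renL_bexp b1) (renR_bexp b2)) (reify r1) (reify r2)"

end

theory Submission
  imports Defs
begin

inductive_cases SkipE: "big_step s SKIP t"
inductive_cases AssignE: "big_step s (Assign x a) t"
inductive_cases SeqE: "big_step s (Seq c1 c2) t"
inductive_cases IfE: "big_step s (If b c1 c2) t"

lemma hoare_sound: "hoare P c Q \<Longrightarrow> big_step s c t \<Longrightarrow> P s \<Longrightarrow> Q t"
proof (induction P c Q arbitrary: s t rule: hoare.induct)
  case (HSkip P) then show ?case by (auto elim: SkipE)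
next
  case (HAssign a x Q) then show ?case by (force elim!: AssignE simp: sat_def simp del: fun_upd_apply)
next
  case (HSeq P c1 Q c2 R) then show ?case by (blast elim: SeqE)
next
  case (HIf P b c1 Q c2) then show ?case by (auto elim!: IfE simp: sat_def)
next
  case (HWhile P b c)
  from HWhile.prems show ?case
  proof (induction s "While b c" t rule: big_step.induct)
    case (WhileFalse s) then show ?case by (simp add: sat_def)
  next
    case (WhileTrue s s' s'') then show ?case using HWhile.IH by (simp add: sat_def)
  qed
next
  case (HConseq P' P c Q Q') then show ?case by (simp add: sat_def)
qed

lemma avalL: "aval (map_aexp Inl a) (merge s1 s2) = aval a s1"
  by (induction a) (auto simp: merge_def)
lemma avalR: "aval (map_aexp Inr a) (merge s1 s2) = aval a s2"
  by (induction a) (auto simp: merge_def)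
lemma bvalL0: "bval (map_bexp Inl b) (merge s1 s2) = bval b s1"
  by (induction b) (simp_all add: avalL)
lemma bvalR0: "bval (map_bexp Inr b) (merge s1 s2) = bval b s2"
  by (induction b) (simp_all add: avalR)
lemma bvalL: "bval (renL_bexp b) (merge s1 s2) = bval b s1"
  unfolding renL_bexp_def by (rule bvalL0)
lemma bvalR: "bval (renR_bexp b) (merge s1 s2) = bval b s2"
  unfolding renR_bexp_def by (rule bvalR0)

lemma mergeL: "(merge s1 s2)(Inl x \<mapsto> v) = merge (s1(x \<mapsto> v)) s2"
  by (rule ext) (auto simp: merge_def split: sum.splits)
lemma mergeR: "(merge s1 s2)(Inr x \<mapsto> v) = merge s1 (s2(x \<mapsto> v))"
  by (rule ext) (auto simp: merge_def split: sum.splits)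

lemma bigL: "big_step s c t \<Longrightarrow> big_step (merge s s2) (renL_com c) (merge t s2)"
proof (induction rule: big_step.induct)
  case (Assign a s v x)
    have "big_step (merge s s2) (Assign (Inl x) (map_aexp Inl a)) ((merge s s2)(Inl x \<mapsto> v))"
      by (rule big_step.Assign) (simp add: avalL Assign)
    then show ?case by (simp only: mergeL renL_com_def com.map)
next
  case (Skip s) then show ?case by (simp add: renL_com_def big_step.Skip)
next
  case (Seq s c1 s' c2 s'') then show ?case by (simp add: renL_com_def) (rule big_step.Seq)
next
  case (IfTrue b s c1 t c2) then show ?case
    by (simp add: renL_com_def) (rule big_step.IfTrue, simp add: bvalL0, simp)
next
  case (IfFalse b s c2 t c1) then show ?case
    by (simp add: renL_com_def) (rule big_step.IfFalse, simp add: bvalL0, simp)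
next
  case (WhileFalse b s c) then show ?case
    by (simp add: renL_com_def) (rule big_step.WhileFalse, simp add: bvalL0)
next
  case (WhileTrue b s c s' s'') then show ?case
    by (simp add: renL_com_def) (rule big_step.WhileTrue, simp add: bvalL0, simp, simp)
qed

lemma bigR: "big_step s c t \<Longrightarrow> big_step (merge s1 s) (renR_com c) (merge s1 t)"
proof (induction rule: big_step.induct)
  case (Assign a s v x)
    have "big_step (merge s1 s) (Assign (Inr x) (map_aexp Inr a)) ((merge s1 s)(Inr x \<mapsto> v))"
      by (rule big_step.Assign) (simp add: avalR Assign)
    then show ?case by (simp only: mergeR renR_com_def com.map)
next
  case (Skip s) then show ?case by (simp add: renR_com_def big_step.Skip)
next
  case (Seq s c1 s' c2 s'') then show ?case by (simp add: renR_com_def) (rule big_step.Seq)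
next
  case (IfTrue b s c1 t c2) then show ?case
    by (simp add: renR_com_def) (rule big_step.IfTrue, simp add: bvalR0, simp)
next
  case (IfFalse b s c2 t c1) then show ?case
    by (simp add: renR_com_def) (rule big_step.IfFalse, simp add: bvalR0, simp)
next
  case (WhileFalse b s c) then show ?case
    by (simp add: renR_com_def) (rule big_step.WhileFalse, simp add: bvalR0)
next
  case (WhileTrue b s c s' s'') then show ?case
    by (simp add: renR_com_def) (rule big_step.WhileTrue, simp add: bvalR0, simp, simp)
qed

lemma reify_sim: "rbig_step s r t \<Longrightarrow>
  big_step (merge (fst s) (snd s)) (reify r) (merge (fst t) (snd t))"
proof (induction rule: rbig_step.induct)
  case (RAligned s1 c1 t1 s2 c2 t2)
  then show ?case using bigL[of s1 c1 t1 s2] bigR[of s2 c2 t2 t1]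
    by (simp add: big_step.Seq)
next
  case (RSeq s r1 s' r2 s'') then show ?case by (simp add: big_step.Seq)
next
  case (RIfTrue b1 s1 b2 s2 r1 t r2) then show ?case
    by simp (rule big_step.IfTrue, simp add: bvalL bvalR lift2_def, simp)
next
  case (RIfFalse b1 s1 v1 b2 s2 v2 r2 t r1) then show ?case
    by simp (rule big_step.IfFalse, simp add: bvalL bvalR lift2_def, simp)
next
  case (RWhileFalse b1 s1 v1 b2 s2 v2 r) then show ?case
    by simp (rule big_step.WhileFalse, simp add: bvalL bvalR lift2_def)
next
  case (RWhileTrue b1 s1 b2 s2 r s' s'') then show ?case
    by simp (rule big_step.WhileTrue, simp add: bvalL bvalR lift2_def, simp, simp)
qed

theorem corollary3p5:
  fixes c1 c2 :: "'v com" and r :: "'v rcom" and Phi Psi :: "('v + 'v) assn"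
  assumes "requiv (Aligned c1 c2) r"
    and "hoare Phi (reify r) Psi"
  shows "rel_valid Phi c1 c2 Psi"
  unfolding rel_valid_def
proof (intro allI impI)
  fix s1 s2 t1 t2
  assume "sat (merge s1 s2) Phi" "big_step s1 c1 t1" "big_step s2 c2 t2"
  then have "rbig_step (s1, s2) r (t1, t2)"
    using assms(1) rbig_step.RAligned[of s1 c1 t1 s2 c2 t2] unfolding requiv_def by blast
  from reify_sim[OF this] have "big_step (merge s1 s2) (reify r) (merge t1 t2)" by simp
  then show "sat (merge t1 t2) Psi"
    using hoare_sound[OF assms(2)] \<open>sat (merge s1 s2) Phi\<close> by (simp add: sat_def)
qed

end
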